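(* Consider a POMDP with finite state space $\mathcal S$, finite action space $\mathcal A$, finite observation space $\mathcal Y$, initial state $S_1\sim\rho$ and dynamics $\Pr(S_{t+1},Y_{t+1}\mid S_{1:t},Y_{1:t},A_{1:t})=P(S_{t+1},Y_{t+1}\mid S_t,A_t)$. Let $Z_t\in\mathcal Z$ be an agent state generated recursively by $Z_{t+1}=\phi(Z_t,Y_{t+1},A_t)$ from a fixed initial value, and let actions be chosen by an arbitrary agent-state based behavior policy $\mu=(\mu_1,\mu_2,\dots)$, i.e. $A_t\sim\mu_t(\cdot\mid Z_t)$. Then the process $\{(S_t,Z_t)\}_{t\ge1}$ is a Markov chain, and consequently the processes $\{(S_t,Z_t,A_t)\}_{t\ge1}$ and $\{(S_t,Y_t,Z_t,A_t)\}_{t\ge1}$ are also Markov chains.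
   Context: Markov chains here are allowed to be time-inhomogeneous. *)

theory Defs
  imports "HOL-Probability.Probability"
begin

text \<open>Trajectory entries are tuples (S_t, Y_t, Z_t, A_t).  pomdp_traj ... n is the
  law of the first n+1 entries (times 1..n+1, stored at list positions 0..n).
  rho0 is the joint law of (S_1, Y_1) (its first marginal is rho),
  P s a is the law of (S_{t+1}, Y_{t+1}) given S_t = s, A_t = a,
  phi is the agent-state update Z_{t+1} = phi Z_t Y_{t+1} A_t, z0 = Z_1,
  mu t z is the behaviour policy at time t (t >= 1).\<close>

fun pomdp_traj ::
  "('s \<times> 'y) pmf \<Rightarrow> ('s \<Rightarrow> 'a \<Rightarrow> ('s \<times> 'y) pmf) \<Rightarrow> ('z \<Rightarrow> 'y \<Rightarrow> 'a \<Rightarrow> 'z) \<Rightarrow> 'z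
   \<Rightarrow> (nat \<Rightarrow> 'z \<Rightarrow> 'a pmf) \<Rightarrow> nat \<Rightarrow> ('s \<times> 'y \<times> 'z \<times> 'a) list pmf" where
  "pomdp_traj rho0 P phi z0 mu 0 =
     bind_pmf rho0 (\<lambda>(s, y). bind_pmf (mu 1 z0) (\<lambda>a. return_pmf [(s, y, z0, a)]))"
| "pomdp_traj rho0 P phi z0 mu (Suc n) =
     bind_pmf (pomdp_traj rho0 P phi z0 mu n) (\<lambda>h.
       (case last h of (s, y, z, a) \<Rightarrow>
         bind_pmf (P s a) (\<lambda>(s', y').
           bind_pmf (mu (Suc (Suc n)) (phi z y' a)) (\<lambda>a'.
             return_pmf (h @ [(s', y', phi z y' a, a')])))))"

text \<open>The process X_t = f(trajectory entry t) is a (possibly time-inhomogeneous)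
  Markov chain: for every time n+1 (0-indexed n), every history h of values of
  X_1..X_{n+1} and every value w,
  P(X_{1:n+1} = h, X_{n+2} = w) P(X_{n+1} = last h)
    = P(X_{1:n+1} = h) P(X_{n+1} = last h, X_{n+2} = w),
  i.e. P(X_{n+2} = w | X_{1:n+1} = h) = P(X_{n+2} = w | X_{n+1} = last h)
  whenever the conditioning event has positive probability.\<close>

definition markov_proj :: "(nat \<Rightarrow> 'x list pmf) \<Rightarrow> ('x \<Rightarrow> 'w) \<Rightarrow> bool" where
  "markov_proj p f \<longleftrightarrow>
    (\<forall>n h w. length h = Suc n \<longrightarrow>
      measure_pmf.prob (p (Suc n)) {\<tau>. map f \<tau> = h @ [w]}
        * measure_pmf.prob (p (Suc n)) {\<tau>. f (\<tau> ! n) = last h}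
      = measure_pmf.prob (p (Suc n)) {\<tau>. map f (take (Suc n) \<tau>) = h}
        * measure_pmf.prob (p (Suc n)) {\<tau>. f (\<tau> ! n) = last h \<and> f (\<tau> ! Suc n) = w})"

end

theory Submission
  imports Defs
begin

lemma prob_kernel:
  fixes q :: "'l pmf" and D :: "'l \<Rightarrow> 'x pmf"
  assumes "\<And>l. R l \<Longrightarrow> D l = E"
  shows "measure_pmf.prob (bind_pmf q (\<lambda>l. map_pmf (Pair l) (D l))) {(l, x). R l \<and> S x}
       = measure_pmf.prob q {l. R l} * measure_pmf.prob E {x. S x}"
proof -
  have "emeasure (measure_pmf (bind_pmf q (\<lambda>l. map_pmf (Pair l) (D l)))) {(l, x). R l \<and> S x}
     = (\<integral>\<^sup>+l. emeasure (measure_pmf E) {x. S x} * indicator {l. R l} l \<partial>q)"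
    by (rule trans[OF emeasure_bind_pmf], rule nn_integral_cong)
       (auto simp: assms indicator_def vimage_def)
  also have "\<dots> = emeasure (measure_pmf E) {x. S x} * emeasure (measure_pmf q) {l. R l}"
    by (simp add: nn_integral_cmult_indicator)
  finally show ?thesis
    by (simp add: measure_pmf.emeasure_eq_measure flip: ennreal_mult)
qed

lemma prob_cong_pmf:
  assumes "\<And>x. x \<in> set_pmf p \<Longrightarrow> x \<in> A \<longleftrightarrow> x \<in> B"
  shows "measure_pmf.prob p A = measure_pmf.prob p B"
proof -
  have "A \<inter> set_pmf p = B \<inter> set_pmf p" using assms by blast
  thus ?thesis by (metis measure_Int_set_pmf)
qed

lemma markov_from_kernel:
  fixes p :: "nat \<Rightarrow> 'x list pmf" and f :: "'x \<Rightarrow> 'w" and D :: "nat \<Rightarrow> 'w \<Rightarrow> 'w pmf"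
  assumes len: "\<And>n \<tau>. \<tau> \<in> set_pmf (p n) \<Longrightarrow> length \<tau> = Suc n"
    and ker: "\<And>n. map_pmf (\<lambda>\<tau>. (map f (butlast \<tau>), f (last \<tau>))) (p (Suc n))
        = bind_pmf (map_pmf (map f) (p n)) (\<lambda>l. map_pmf (Pair l) (D n (last l)))"
  shows "markov_proj p f"
  unfolding markov_proj_def
proof (intro allI impI)
  fix n :: nat and h :: "'w list" and w :: 'w assume lh: "length h = Suc n"
  define F where "F = (\<lambda>\<tau>. (map f (butlast \<tau>), f (last \<tau>)))"
  define q where "q = map_pmf (map f) (p n)"
  define E where "E = D n (last h)"
  have J: "measure_pmf.prob (p (Suc n)) (F -` X) = measure_pmf.prob (bind_pmf q (\<lambda>l. map_pmf (Pair l) (D n (last l)))) X" for X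
    using ker[of n] unfolding F_def q_def by (metis measure_map_pmf)
  have facts: "map f \<tau> = map f (butlast \<tau>) @ [f (last \<tau>)] \<and> f (\<tau> ! n) = last (map f (butlast \<tau>))
      \<and> \<tau> ! Suc n = last \<tau> \<and> take (Suc n) \<tau> = butlast \<tau>"
    if "\<tau> \<in> set_pmf (p (Suc n))" for \<tau>
  proof -
    have l: "length \<tau> = Suc (Suc n)" using len that by blast
    then have ne: "\<tau> \<noteq> []" "butlast \<tau> \<noteq> []" by (auto simp flip: length_0_conv)
    have "map f \<tau> = map f (butlast \<tau>) @ [f (last \<tau>)]"
      using append_butlast_last_id[OF ne(1)] by (metis map_append list.map(1,2))
    moreover have "f (\<tau> ! n) = last (map f (butlast \<tau>))"
      using ne l by (simp add: last_map last_conv_nth nth_butlast)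
    moreover have "\<tau> ! Suc n = last \<tau>" using l ne by (simp add: last_conv_nth)
    moreover have "take (Suc n) \<tau> = butlast \<tau>" using l by (simp add: butlast_conv_take)
    ultimately show ?thesis by blast
  qed
  have e1: "measure_pmf.prob (p (Suc n)) {\<tau>. map f \<tau> = h @ [w]}
      = measure_pmf.prob q {l. l = h} * measure_pmf.prob E {x. x = w}"
  proof -
    have "measure_pmf.prob (p (Suc n)) {\<tau>. map f \<tau> = h @ [w]}
        = measure_pmf.prob (p (Suc n)) (F -` {(l, x). l = h \<and> x = w})"
      by (rule prob_cong_pmf) (auto simp: F_def dest!: facts)
    also have "\<dots> = measure_pmf.prob q {l. l = h} * measure_pmf.prob E {x. x = w}"
      unfolding J by (rule prob_kernel) (auto simp: E_def)
    finally show ?thesis .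
  qed
  have e2: "measure_pmf.prob (p (Suc n)) {\<tau>. f (\<tau> ! n) = last h}
      = measure_pmf.prob q {l. last l = last h} * measure_pmf.prob E {x. True}"
  proof -
    have "measure_pmf.prob (p (Suc n)) {\<tau>. f (\<tau> ! n) = last h}
        = measure_pmf.prob (p (Suc n)) (F -` {(l, x). last l = last h \<and> True})"
      by (rule prob_cong_pmf) (auto simp: F_def dest!: facts)
    also have "\<dots> = measure_pmf.prob q {l. last l = last h} * measure_pmf.prob E {x. True}"
      unfolding J by (rule prob_kernel) (auto simp: E_def)
    finally show ?thesis .
  qed
  have e3: "measure_pmf.prob (p (Suc n)) {\<tau>. f (\<tau> ! n) = last h \<and> f (\<tau> ! Suc n) = w}
      = measure_pmf.prob q {l. last l = last h} * measure_pmf.prob E {x. x = w}"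
  proof -
    have "measure_pmf.prob (p (Suc n)) {\<tau>. f (\<tau> ! n) = last h \<and> f (\<tau> ! Suc n) = w}
        = measure_pmf.prob (p (Suc n)) (F -` {(l, x). last l = last h \<and> x = w})"
      by (rule prob_cong_pmf) (auto simp: F_def dest!: facts)
    also have "\<dots> = measure_pmf.prob q {l. last l = last h} * measure_pmf.prob E {x. x = w}"
      unfolding J by (rule prob_kernel) (auto simp: E_def)
    finally show ?thesis .
  qed
  have e4: "measure_pmf.prob (p (Suc n)) {\<tau>. map f (take (Suc n) \<tau>) = h}
      = measure_pmf.prob q {l. l = h} * measure_pmf.prob E {x. True}"
  proof -
    have "measure_pmf.prob (p (Suc n)) {\<tau>. map f (take (Suc n) \<tau>) = h}
        = measure_pmf.prob (p (Suc n)) (F -` {(l, x). l = h \<and> True})"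
      by (rule prob_cong_pmf) (auto simp: F_def dest!: facts)
    also have "\<dots> = measure_pmf.prob q {l. l = h} * measure_pmf.prob E {x. True}"
      unfolding J by (rule prob_kernel) (auto simp: E_def)
    finally show ?thesis .
  qed
  show "measure_pmf.prob (p (Suc n)) {\<tau>. map f \<tau> = h @ [w]} *
       measure_pmf.prob (p (Suc n)) {\<tau>. f (\<tau> ! n) = last h} =
       measure_pmf.prob (p (Suc n)) {\<tau>. map f (take (Suc n) \<tau>) = h} *
       measure_pmf.prob (p (Suc n)) {\<tau>. f (\<tau> ! n) = last h \<and> f (\<tau> ! Suc n) = w}"
    unfolding e1 e2 e3 e4 by simp
qed

context
  fixes rho0 :: "('s \<times> 'y) pmf"
    and P :: "'s \<Rightarrow> 'a \<Rightarrow> ('s \<times> 'y) pmf"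
    and phi :: "'z \<Rightarrow> 'y \<Rightarrow> 'a \<Rightarrow> 'z"
    and z0 :: 'z
    and mu :: "nat \<Rightarrow> 'z \<Rightarrow> 'a pmf"
begin

abbreviation "T \<equiv> pomdp_traj rho0 P phi z0 mu"

definition K :: "nat \<Rightarrow> 's \<Rightarrow> 'z \<Rightarrow> 'a \<Rightarrow> ('s \<times> 'y \<times> 'z \<times> 'a) pmf" where
  "K n s z a = bind_pmf (P s a) (\<lambda>(s', y'). map_pmf (\<lambda>a'. (s', y', phi z y' a, a')) (mu (Suc (Suc n)) (phi z y' a)))"

definition Kc :: "nat \<Rightarrow> ('s \<times> 'y \<times> 'z \<times> 'a) \<Rightarrow> ('s \<times> 'y \<times> 'z \<times> 'a) pmf" where
  "Kc n e = (case e of (s, y, z, a) \<Rightarrow> K n s z a)"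

lemma T_step: "T (Suc n) = bind_pmf (T n) (\<lambda>h. map_pmf (\<lambda>x. h @ [x]) (Kc n (last h)))"
  by (auto simp: Kc_def K_def map_bind_pmf map_pmf_def bind_assoc_pmf bind_return_pmf
        split: prod.split intro!: bind_pmf_cong)

lemma T_len: "\<tau> \<in> set_pmf (T n) \<Longrightarrow> length \<tau> = Suc n"
proof (induction n arbitrary: \<tau>)
  case 0
  then show ?case by (auto split: prod.splits)
next
  case (Suc n)
  then show ?case unfolding T_step by auto
qed

definition Pre :: "nat \<Rightarrow> (('s \<times> 'y \<times> 'z \<times> 'a) list \<times> 's \<times> 'y \<times> 'z) pmf" where
  "Pre n = (case n of 0 \<Rightarrow> map_pmf (\<lambda>(s, y). ([], s, y, z0)) rho0
     | Suc m \<Rightarrow> bind_pmf (T m) (\<lambda>h. case last h of (s, y, z, a) \<Rightarrow>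
          map_pmf (\<lambda>(s', y'). (h, s', y', phi z y' a)) (P s a)))"

lemma T_Pre: "T n = bind_pmf (Pre n) (\<lambda>(hist, s, y, z). map_pmf (\<lambda>a. hist @ [(s, y, z, a)]) (mu (Suc n) z))"
proof (cases n)
  case 0
  then show ?thesis
    by (auto simp: Pre_def map_pmf_def bind_assoc_pmf bind_return_pmf split: prod.split intro!: bind_pmf_cong)
next
  case (Suc m)
  then show ?thesis
    by (auto simp: Pre_def map_pmf_def bind_assoc_pmf bind_return_pmf split: prod.split intro!: bind_pmf_cong)
qed


lemma T_ne: "h \<in> set_pmf (T n) \<Longrightarrow> h \<noteq> []"
  using T_len by fastforce

lemma kernel_det:
  fixes f :: "('s \<times> 'y \<times> 'z \<times> 'a) \<Rightarrow> 'w" and D :: "nat \<Rightarrow> 'w \<Rightarrow> 'w pmf"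
  assumes "\<And>n e. D n (f e) = map_pmf f (Kc n e)"
  shows "map_pmf (\<lambda>\<tau>. (map f (butlast \<tau>), f (last \<tau>))) (T (Suc n))
        = bind_pmf (map_pmf (map f) (T n)) (\<lambda>l. map_pmf (Pair l) (D n (last l)))"
  unfolding T_step map_bind_pmf bind_map_pmf map_pmf_comp
  by (rule bind_pmf_cong) (auto simp: assms last_map T_ne map_pmf_comp)

lemma kernel_sz:
  "map_pmf (\<lambda>\<tau>. (map (\<lambda>(s, y, z, a). (s, z)) (butlast \<tau>), (\<lambda>(s, y, z, a). (s, z)) (last \<tau>))) (T (Suc n))
   = bind_pmf (map_pmf (map (\<lambda>(s, y, z, a). (s, z))) (T n))
       (\<lambda>l. map_pmf (Pair l) ((\<lambda>(s, z). bind_pmf (mu (Suc n) z) (\<lambda>a. map_pmf (\<lambda>(s, y, z, a). (s, z)) (K n s z a))) (last l)))"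
  unfolding T_step map_bind_pmf bind_map_pmf map_pmf_comp
  apply (subst (1 2) T_Pre)
  unfolding bind_assoc_pmf
  by (rule bind_pmf_cong) (auto simp: bind_map_pmf map_bind_pmf map_pmf_comp Kc_def split: prod.split)

end

theorem lemma1:
  fixes rho0 :: "('s::finite \<times> 'y::finite) pmf"
    and P :: "'s \<Rightarrow> 'a::finite \<Rightarrow> ('s \<times> 'y) pmf"
    and phi :: "'z::finite \<Rightarrow> 'y \<Rightarrow> 'a \<Rightarrow> 'z"
    and z0 :: 'z
    and mu :: "nat \<Rightarrow> 'z \<Rightarrow> 'a pmf"
  shows "markov_proj (pomdp_traj rho0 P phi z0 mu) (\<lambda>(s, y, z, a). (s, z))
       \<and> markov_proj (pomdp_traj rho0 P phi z0 mu) (\<lambda>(s, y, z, a). (s, z, a))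
       \<and> markov_proj (pomdp_traj rho0 P phi z0 mu) (\<lambda>(s, y, z, a). (s, y, z, a))"
proof (intro conjI)
  show "markov_proj (pomdp_traj rho0 P phi z0 mu) (\<lambda>(s, y, z, a). (s, z))"
    by (rule markov_from_kernel, erule T_len, rule kernel_sz)
  show "markov_proj (pomdp_traj rho0 P phi z0 mu) (\<lambda>(s, y, z, a). (s, z, a))"
    apply (rule markov_from_kernel, erule T_len)
    by (rule kernel_det[where
          D = "\<lambda>n (s, z, a). map_pmf (\<lambda>(s, y, z, a). (s, z, a)) (K P phi mu n s z a)"])
       (auto simp: Kc_def split: prod.split)
  show "markov_proj (pomdp_traj rho0 P phi z0 mu) (\<lambda>(s, y, z, a). (s, y, z, a))"
    apply (rule markov_from_kernel, erule T_len)
    by (rule kernel_det[where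
          D = "\<lambda>n (s, y, z, a). map_pmf (\<lambda>(s, y, z, a). (s, y, z, a)) (K P phi mu n s z a)"])
       (auto simp: Kc_def split: prod.split)
qed

end
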